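(* Let $H$ be a Hardy field, $f\in H^\times$, $g\in H$, and consider $A(y)=fy''+f'y'+gy$. Suppose that some (equivalently every) germ $F\in\mathcal C^1$ with $F'=f^{-1}$ satisfies $F>\mathbb R$, and some (equivalently every) germ $G\in\mathcal C^1$ with $G'=g$ satisfies $G>\mathbb R$. Then $A(y)=0$ for some oscillating $y\in\mathcal C^{<\infty}$.
   Context: Germs at $+\infty$; $\mathcal C^n$ germs of $n$-times continuously differentiable real functions on intervals $(a,+\infty)$, $\mathcal C^{<\infty}=\bigcap_n\mathcal C^n$. A Hardy field is a subfield of $\mathcal C^{<\infty}$ closed under derivation. For germs, $F>\mathbb R$ means $F(t)\to+\infty$ as $t\to+\infty$. A germ $y$ oscillates if $y(t)=0$ for arbitrarily large $t$ and $y(t)\neq0$ for arbitrarily large $t$. *)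

theory Defs
  imports "HOL-Analysis.Analysis"
begin

text \<open>Germs at +infinity are represented by total functions real => real;
  all properties below only depend on the function on some tail (a, +infinity).\<close>

definition C_on :: "nat \<Rightarrow> real \<Rightarrow> (real \<Rightarrow> real) \<Rightarrow> bool" where
  "C_on n a f \<longleftrightarrow>
     (\<forall>k<n. \<forall>t>a. ((deriv ^^ k) f has_real_derivative (deriv ^^ Suc k) f t) (at t))
     \<and> continuous_on {a<..} ((deriv ^^ n) f)"

definition germ_C :: "nat \<Rightarrow> (real \<Rightarrow> real) \<Rightarrow> bool" where
  "germ_C n f \<longleftrightarrow> (\<exists>a. C_on n a f)"

definition germ_Cinf :: "(real \<Rightarrow> real) \<Rightarrow> bool" where
  "germ_Cinf f \<longleftrightarrow> (\<forall>n. germ_C n f)"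

text \<open>A Hardy field, given as the set of all representatives of its germs:
  a subfield of the ring of C^{<infinity} germs that is closed under derivation.\<close>
definition hardy_field :: "(real \<Rightarrow> real) set \<Rightarrow> bool" where
  "hardy_field H \<longleftrightarrow>
     (\<forall>f\<in>H. germ_Cinf f)
   \<and> (\<forall>f g. f \<in> H \<longrightarrow> eventually (\<lambda>t. f t = g t) at_top \<longrightarrow> g \<in> H)
   \<and> (\<lambda>_. 0) \<in> H \<and> (\<lambda>_. 1) \<in> H
   \<and> (\<forall>f\<in>H. \<forall>g\<in>H. (\<lambda>t. f t + g t) \<in> H \<and> (\<lambda>t. f t * g t) \<in> H)
   \<and> (\<forall>f\<in>H. (\<lambda>t. - f t) \<in> H)
   \<and> (\<forall>f\<in>H. \<not> eventually (\<lambda>t. f t = 0) at_top \<longrightarrow> (\<lambda>t. inverse (f t)) \<in> H)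
   \<and> (\<forall>f\<in>H. deriv f \<in> H)"

definition oscillates :: "(real \<Rightarrow> real) \<Rightarrow> bool" where
  "oscillates y \<longleftrightarrow> frequently (\<lambda>t. y t = 0) at_top \<and> frequently (\<lambda>t. y t \<noteq> 0) at_top"

end

theory Submission
  imports Defs
begin

lemma C_on_0: "C_on 0 a h \<longleftrightarrow> continuous_on {a<..} h"
  by (simp add: C_on_def)

lemma C_on_Suc: "C_on (Suc n) a h \<longleftrightarrow>
   (\<forall>t>a. (h has_real_derivative deriv h t) (at t)) \<and> C_on n a (deriv h)"
proof -
  have e: "\<And>k. (deriv ^^ Suc k) h = (deriv ^^ k) (deriv h)"
    by (simp add: funpow_Suc_right del: funpow.simps)
  have "(\<forall>k<Suc n. \<forall>t>a. ((deriv ^^ k) h has_real_derivative (deriv ^^ Suc k) h t) (at t))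
     \<longleftrightarrow> (\<forall>t>a. (h has_real_derivative deriv h t) (at t)) \<and>
        (\<forall>k<n. \<forall>t>a. ((deriv ^^ k) (deriv h) has_real_derivative (deriv ^^ Suc k) (deriv h) t) (at t))"
    (is "?L \<longleftrightarrow> ?R")
  proof
    assume L: ?L
    show ?R
    proof
      show "\<forall>t>a. (h has_real_derivative deriv h t) (at t)" using L[rule_format, of 0] by simp
      show "\<forall>k<n. \<forall>t>a. ((deriv ^^ k) (deriv h) has_real_derivative (deriv ^^ Suc k) (deriv h) t) (at t)"
        using L[rule_format, of "Suc k" for k] by (simp only: e[symmetric]) (metis Suc_mono e)
    qed
  next
    assume R: ?R
    show ?L
    proof (intro allI impI)
      fix k t assume "k < Suc n" "a < t"
      then show "((deriv ^^ k) h has_real_derivative (deriv ^^ Suc k) h t) (at t)"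
      proof (cases k)
        case 0 then show ?thesis using R \<open>a < t\<close> by simp
      next
        case (Suc k')
        have "(deriv ^^ k) h = (deriv ^^ k') (deriv h)" "(deriv ^^ Suc k) h = (deriv ^^ Suc k') (deriv h)"
          using Suc e by auto
        then show ?thesis using R \<open>a < t\<close> \<open>k < Suc n\<close> Suc by auto
      qed
    qed
  qed
  then show ?thesis unfolding C_on_def e by blast
qed

lemma C_on_cong:
  assumes "\<And>t. t > a \<Longrightarrow> h t = hh t"
  shows "C_on n a h \<longleftrightarrow> C_on n a hh"
proof -
  have eq: "\<forall>t>a. (deriv ^^ k) h t = (deriv ^^ k) hh t" for k
  proof (induction k)
    case 0 then show ?case using assms by simp
  next
    case (Suc k)
    show ?case
    proof (intro allI impI)
      fix t assume t: "a < t"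
      have "eventually (\<lambda>x. (deriv ^^ k) h x = (deriv ^^ k) hh x) (nhds t)"
        using Suc eventually_nhds_in_open[of "{a<..}" t] t
        by (auto elim!: eventually_mono)
      then show "(deriv ^^ Suc k) h t = (deriv ^^ Suc k) hh t"
        unfolding funpow.simps o_apply by (rule deriv_cong_ev) simp_all
    qed
  qed
  have ev: "eventually (\<lambda>x. (deriv ^^ k) h x = (deriv ^^ k) hh x) (nhds t)" if "t > a" for k t
    using eq[of k] eventually_nhds_in_open[of "{a<..}" t] that by (auto elim!: eventually_mono)
  have "(((deriv ^^ k) h has_real_derivative (deriv ^^ Suc k) h t) (at t)) \<longleftrightarrow>
        (((deriv ^^ k) hh has_real_derivative (deriv ^^ Suc k) hh t) (at t))" if "t > a" for k t
    by (rule DERIV_cong_ev) (simp_all add: ev[OF that] eq[rule_format, OF that] del: funpow.simps)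
  moreover have "continuous_on {a<..} ((deriv ^^ n) h) \<longleftrightarrow> continuous_on {a<..} ((deriv ^^ n) hh)"
    by (rule continuous_on_cong) (use eq in auto)
  ultimately show ?thesis unfolding C_on_def by auto
qed

lemma C_on_mono_a: "C_on n a h \<Longrightarrow> a \<le> b \<Longrightarrow> C_on n b h"
  unfolding C_on_def by (auto intro: continuous_on_subset)

lemma C_on_cont: "C_on n a h \<Longrightarrow> continuous_on {a<..} h"
proof (induction n arbitrary: h)
  case 0 then show ?case by (simp add: C_on_0)
next
  case (Suc n)
  then have "\<forall>t>a. (h has_real_derivative deriv h t) (at t)" by (simp add: C_on_Suc)
  then show ?case
    by (intro continuous_at_imp_continuous_on) (auto dest: DERIV_isCont)
qed

lemma C_on_down: "C_on (Suc n) a h \<Longrightarrow> C_on n a h"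
proof (induction n arbitrary: h)
  case 0 then show ?case by (simp add: C_on_0 C_on_cont)
next
  case (Suc n)
  then show ?case by (subst C_on_Suc) (auto simp: C_on_Suc[of "Suc n"])
qed

lemma C_on_add: "C_on n a u \<Longrightarrow> C_on n a v \<Longrightarrow> C_on n a (\<lambda>t. u t + v t)"
proof (induction n arbitrary: u v)
  case 0 then show ?case by (simp add: C_on_0 continuous_on_add)
next
  case (Suc n)
  from Suc.prems have du: "\<forall>t>a. (u has_real_derivative deriv u t) (at t)" "C_on n a (deriv u)"
    and dv: "\<forall>t>a. (v has_real_derivative deriv v t) (at t)" "C_on n a (deriv v)"
    by (auto simp: C_on_Suc)
  have d: "((\<lambda>t. u t + v t) has_real_derivative deriv u t + deriv v t) (at t)" if "t > a" for t
    using du dv that by (auto intro!: derivative_intros)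
  have "C_on n a (deriv (\<lambda>t. u t + v t))"
    by (subst C_on_cong[where hh="\<lambda>t. deriv u t + deriv v t"]) 
       (use d DERIV_imp_deriv Suc.IH du dv in auto)
  moreover have "\<forall>t>a. ((\<lambda>t. u t + v t) has_real_derivative deriv (\<lambda>t. u t + v t) t) (at t)"
    using d DERIV_imp_deriv[OF d] by simp
  ultimately show ?case by (auto simp: C_on_Suc)
qed

lemma C_on_mult: "C_on n a u \<Longrightarrow> C_on n a v \<Longrightarrow> C_on n a (\<lambda>t. u t * v t)"
proof (induction n arbitrary: u v)
  case 0 then show ?case by (simp add: C_on_0 continuous_on_mult)
next
  case (Suc n)
  from Suc.prems have du: "\<forall>t>a. (u has_real_derivative deriv u t) (at t)" "C_on n a (deriv u)"
    and dv: "\<forall>t>a. (v has_real_derivative deriv v t) (at t)" "C_on n a (deriv v)"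
    by (auto simp: C_on_Suc)
  have un: "C_on n a u" "C_on n a v" using Suc.prems C_on_down by auto
  have d: "((\<lambda>t. u t * v t) has_real_derivative deriv u t * v t + u t * deriv v t) (at t)" if "t > a" for t
    using du dv that by (auto intro!: derivative_eq_intros)
  have "C_on n a (deriv (\<lambda>t. u t * v t))"
    by (subst C_on_cong[where hh="\<lambda>t. deriv u t * v t + u t * deriv v t"]) 
       (use d DERIV_imp_deriv Suc.IH du dv un C_on_add in auto)
  moreover have "\<forall>t>a. ((\<lambda>t. u t * v t) has_real_derivative deriv (\<lambda>t. u t * v t) t) (at t)"
    using d DERIV_imp_deriv[OF d] by simp
  ultimately show ?case by (auto simp: C_on_Suc)
qed

lemma C_on_deriv_eq:
  assumes "\<And>t. t > a \<Longrightarrow> (h has_real_derivative u t) (at t)" "C_on n a u"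
  shows "C_on (Suc n) a h"
proof -
  have "\<And>t. t > a \<Longrightarrow> deriv h t = u t" using assms DERIV_imp_deriv by blast
  then show ?thesis using assms C_on_cong[of a "deriv h" u n]
    by (auto simp: C_on_Suc intro: DERIV_imp_deriv)
qed

fun pic :: "(real\<Rightarrow>real) \<Rightarrow> (real\<Rightarrow>real) \<Rightarrow> real \<Rightarrow> nat \<Rightarrow> real \<Rightarrow> real \<times> real" where
  "pic p q t0 0 = (\<lambda>t. (1,0))"
| "pic p q t0 (Suc n) = (\<lambda>t. (integral {t0..t} (\<lambda>s. p s * snd (pic p q t0 n s)),
                             integral {t0..t} (\<lambda>s. q s * fst (pic p q t0 n s))))"

lemma poly_int:
  fixes c t0 t :: real
  assumes "t0 \<le> t"
  shows "((\<lambda>s. c * (s - t0)^n / fact n) has_integral c * (t - t0)^(Suc n) / fact (Suc n)) {t0..t}"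
proof -
  have "((\<lambda>s. c * (s - t0)^(Suc n) / fact (Suc n)) has_vector_derivative c * (x - t0)^n / fact n) (at x within {t0..t})" for x
  proof -
    have "((\<lambda>s. c * (s - t0)^(Suc n) / fact (Suc n)) has_real_derivative
           c * (real (Suc n) * (x - t0)^n) / fact (Suc n)) (at x within {t0..t})"
      apply (intro DERIV_cdivide DERIV_cmult)
      apply (auto intro!: derivative_eq_intros)
      apply (cases n)
       apply (simp_all add: power_Suc2 algebra_simps)
      done
    moreover have "c * (real (Suc n) * (x - t0)^n) / fact (Suc n) = c * (x - t0)^n / fact n"
      by (simp add: fact_Suc field_simps del: of_nat_Suc)
    ultimately show ?thesis by (simp add: has_real_derivative_iff_has_vector_derivative)
  qed
  from fundamental_theorem_of_calculus[OF assms this] show ?thesis by simp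
qed

locale odeset =
  fixes p q :: "real \<Rightarrow> real" and t0 :: real
  assumes cp: "continuous_on {t0..} p" and cq: "continuous_on {t0..} q"
begin

abbreviation "P \<equiv> pic p q t0"

lemma cpb: "continuous_on {t0..b} p" and cqb: "continuous_on {t0..b} q"
  using cp cq by (auto intro: continuous_on_subset)

lemma pic_cont: "continuous_on {t0..b} (\<lambda>t. fst (P n t)) \<and> continuous_on {t0..b} (\<lambda>t. snd (P n t))"
proof (induction n arbitrary: b)
  case 0 then show ?case by simp
next
  case (Suc n)
  have "(\<lambda>s. p s * snd (P n s)) integrable_on {t0..b}" "(\<lambda>s. q s * fst (P n s)) integrable_on {t0..b}"
    using continuous_on_mult[OF cpb conjunct2[OF Suc.IH]] continuous_on_mult[OF cqb conjunct1[OF Suc.IH]]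
    by (auto intro!: integrable_continuous_real)
  then show ?case by (simp add: indefinite_integral_continuous_1)
qed

lemma pic_bound:
  assumes M: "\<And>s. s \<in> {t0..b} \<Longrightarrow> \<bar>p s\<bar> \<le> M \<and> \<bar>q s\<bar> \<le> M"
  shows "t \<in> {t0..b} \<Longrightarrow> \<bar>fst (P n t)\<bar> \<le> M^n * (t - t0)^n / fact n \<and> \<bar>snd (P n t)\<bar> \<le> M^n * (t - t0)^n / fact n"
proof (induction n arbitrary: t)
  case 0 then show ?case by simp
next
  case (Suc n)
  then have t: "t0 \<le> t" "t \<le> b" by auto
  have M0: "0 \<le> M" using M[of t0] t by auto
  have bnd: "\<bar>integral {t0..t} (\<lambda>s. r s * w s)\<bar> \<le> M^(Suc n) * (t - t0)^(Suc n) / fact (Suc n)"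
    if r: "\<And>s. s \<in> {t0..b} \<Longrightarrow> \<bar>r s\<bar> \<le> M" and rc: "continuous_on {t0..b} r"
    and w: "\<And>s. s \<in> {t0..b} \<Longrightarrow> \<bar>w s\<bar> \<le> M^n * (s - t0)^n / fact n"
    and wc: "continuous_on {t0..b} w" for r w
  proof -
    have sub: "{t0..t} \<subseteq> {t0..b}" using t by auto
    have i1: "(\<lambda>s. r s * w s) integrable_on {t0..t}"
      using rc wc sub by (auto intro!: integrable_continuous_real continuous_intros intro: continuous_on_subset)
    have pi: "((\<lambda>s. M^(Suc n) * (s - t0)^n / fact n) has_integral M^(Suc n) * (t - t0)^(Suc n) / fact (Suc n)) {t0..t}"
      using poly_int t by blast
    have le: "norm (r s * w s) \<le> M^(Suc n) * (s - t0)^n / fact n" if "s \<in> {t0..t}" for s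
    proof -
      have "\<bar>r s\<bar> * \<bar>w s\<bar> \<le> M * (M^n * (s - t0)^n / fact n)"
        using r[of s] w[of s] sub that M0 by (intro mult_mono) auto
      then show ?thesis by (simp add: abs_mult)
    qed
    have "norm (integral {t0..t} (\<lambda>s. r s * w s)) \<le> integral {t0..t} (\<lambda>s. M^(Suc n) * (s - t0)^n / fact n)"
      by (rule integral_norm_bound_integral[OF i1]) (use pi le in auto)
    moreover note integral_unique[OF pi]
    ultimately show ?thesis by simp
  qed
  have i1: "\<And>s. s \<in> {t0..b} \<Longrightarrow> \<bar>snd (P n s)\<bar> \<le> M^n * (s - t0)^n / fact n"
   and i2: "\<And>s. s \<in> {t0..b} \<Longrightarrow> \<bar>fst (P n s)\<bar> \<le> M^n * (s - t0)^n / fact n"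
    using Suc.IH by auto
  have A: "\<bar>integral {t0..t} (\<lambda>s. p s * snd (P n s))\<bar> \<le> M^(Suc n) * (t - t0)^(Suc n) / fact (Suc n)"
    by (rule bnd[OF _ cpb i1]) (use M pic_cont in auto)
  have B: "\<bar>integral {t0..t} (\<lambda>s. q s * fst (P n s))\<bar> \<le> M^(Suc n) * (t - t0)^(Suc n) / fact (Suc n)"
    by (rule bnd[OF _ cqb i2]) (use M pic_cont in auto)
  show ?case using A B by (simp only: pic.simps fst_conv snd_conv)
qed

lemma bound_exists: "\<exists>M. \<forall>s\<in>{t0..b}. \<bar>p s\<bar> \<le> M \<and> \<bar>q s\<bar> \<le> M"
proof -
  have "bounded (p ` {t0..b})" "bounded (q ` {t0..b})"
    using cpb cqb by (auto intro!: compact_imp_bounded compact_continuous_image)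
  then obtain A B where "\<forall>x\<in>p ` {t0..b}. \<bar>x\<bar> \<le> A" "\<forall>x\<in>q ` {t0..b}. \<bar>x\<bar> \<le> B"
    unfolding bounded_real by blast
  then show ?thesis by (intro exI[of _ "max A B"]) auto
qed

definition "Yf t = (\<Sum>n. fst (P n t))"
definition "Zf t = (\<Sum>n. snd (P n t))"

lemma main_sums:
  assumes t: "t0 \<le> t"
  shows "(\<lambda>n. fst (P n t)) sums (1 + integral {t0..t} (\<lambda>s. p s * Zf s))
       \<and> (\<lambda>s. p s * Zf s) integrable_on {t0..t}
       \<and> (\<lambda>n. snd (P n t)) sums (integral {t0..t} (\<lambda>s. q s * Yf s))
       \<and> (\<lambda>s. q s * Yf s) integrable_on {t0..t}"
proof -
  obtain M where M: "\<forall>s\<in>{t0..t}. \<bar>p s\<bar> \<le> M \<and> \<bar>q s\<bar> \<le> M" using bound_exists by blast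
  have "t0 \<in> {t0..t}" using t by simp
  then have "\<bar>p t0\<bar> \<le> M" using M by blast
  then have M0: "0 \<le> M" by linarith
  define a where "a n = M^n * (t - t0)^n / fact n" for n
  have asum: "a sums exp (M * (t - t0))"
  proof -
    have e: "(\<lambda>n. (M*(t-t0))^n /\<^sub>R fact n) = a" by (rule ext) (simp add: a_def power_mult_distrib divide_inverse ac_simps)
    show ?thesis using exp_converges[of "M * (t - t0)"] by (simp only: e)
  qed
  have a0: "0 \<le> a n" for n using M0 t by (simp add: a_def)
  have bnds: "\<bar>fst (P n s)\<bar> \<le> a n \<and> \<bar>snd (P n s)\<bar> \<le> a n" if s: "s \<in> {t0..t}" for n s
  proof -
    have "M^n * (s - t0)^n / fact n \<le> a n"
      unfolding a_def using s M0
      by (intro divide_right_mono mult_left_mono power_mono) auto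
    moreover have "\<bar>fst (P n s)\<bar> \<le> M^n * (s - t0)^n / fact n \<and> \<bar>snd (P n s)\<bar> \<le> M^n * (s - t0)^n / fact n"
      by (rule pic_bound[of t]) (use M s in auto)
    ultimately show ?thesis by linarith
  qed
  have sumfst: "summable (\<lambda>n. fst (P n s))" and sumsnd: "summable (\<lambda>n. snd (P n s))"
    if "s \<in> {t0..t}" for s
    using bnds[OF that] sums_summable[OF asum] by (auto intro: summable_comparison_test'[where g=a and N=0])
  have gen: "c sums integral {t0..t} (\<lambda>s. r s * W s)
             \<and> (\<lambda>s. r s * W s) integrable_on {t0..t}"
    if rM: "\<forall>s\<in>{t0..t}. \<bar>r s\<bar> \<le> M" and rc: "continuous_on {t0..t} r"
      and Wd: "\<And>s. s \<in> {t0..t} \<Longrightarrow> (\<lambda>n. w n s) sums W s"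
      and wb: "\<And>n s. s \<in> {t0..t} \<Longrightarrow> \<bar>w n s\<bar> \<le> a n"
      and wc: "\<And>n. continuous_on {t0..t} (w n)"
      and fe: "\<And>n. c n = integral {t0..t} (\<lambda>s. r s * w n s)"
    for r W w c
  proof -
    define S where "S N s = (\<Sum>i<N. r s * w i s)" for N s
    have Sint: "S N integrable_on {t0..t}" for N
      unfolding S_def using rc wc by (auto intro!: integrable_continuous_real continuous_intros)
    have Sb: "norm (S N s) \<le> M * exp (M * (t - t0))" if "s \<in> {t0..t}" for N s
    proof -
      have "norm (S N s) \<le> (\<Sum>i<N. \<bar>r s\<bar> * \<bar>w i s\<bar>)"
        unfolding S_def by (rule order_trans[OF norm_sum]) (simp add: abs_mult)
      also have "\<dots> \<le> (\<Sum>i<N. M * a i)"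
        using rM wb that M0 by (intro sum_mono mult_mono) auto
      also have "\<dots> = M * (\<Sum>i<N. a i)" by (simp add: sum_distrib_left)
      also have "\<dots> \<le> M * exp (M * (t - t0))"
        using asum a0 M0 sum_le_suminf[of a "{..<N}"] by (intro mult_left_mono) (auto simp: sums_iff)
      finally show ?thesis .
    qed
    have Sc: "(\<lambda>N. S N s) \<longlonglongrightarrow> r s * W s" if "s \<in> {t0..t}" for s
      using sums_mult[OF Wd[OF that], of "r s"] unfolding S_def sums_def by simp
    have dc: "(\<lambda>s. r s * W s) integrable_on {t0..t}"
         "(\<lambda>N. integral {t0..t} (S N)) \<longlonglongrightarrow> integral {t0..t} (\<lambda>s. r s * W s)"
      using dominated_convergence[of S "{t0..t}" "\<lambda>_. M * exp (M * (t - t0))" "\<lambda>s. r s * W s"]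
        Sint Sb Sc by auto
    have "integral {t0..t} (S N) = (\<Sum>i<N. c i)" for N
      unfolding S_def fe using rc wc
      by (subst integral_sum) (auto intro!: integrable_continuous_real continuous_intros)
    then show ?thesis using dc by (simp add: sums_def)
  qed
  have c1: "\<forall>s\<in>{t0..t}. \<bar>p s\<bar> \<le> M" "\<forall>s\<in>{t0..t}. \<bar>q s\<bar> \<le> M" using M by auto
  have g1: "(\<lambda>n. fst (P (Suc n) t)) sums integral {t0..t} (\<lambda>s. p s * Zf s)
             \<and> (\<lambda>s. p s * Zf s) integrable_on {t0..t}"
    by (rule gen[OF c1(1) cpb, where w="\<lambda>n s. snd (P n s)"])
       (use sumsnd bnds pic_cont in \<open>auto simp: Zf_def summable_sums\<close>)
  have g2: "(\<lambda>n. snd (P (Suc n) t)) sums integral {t0..t} (\<lambda>s. q s * Yf s)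
             \<and> (\<lambda>s. q s * Yf s) integrable_on {t0..t}"
    by (rule gen[OF c1(2) cqb, where w="\<lambda>n s. fst (P n s)"])
       (use sumfst bnds pic_cont in \<open>auto simp: Yf_def summable_sums\<close>)
  have "(\<lambda>n. fst (P n t)) sums (integral {t0..t} (\<lambda>s. p s * Zf s) + 1)"
    using g1 sums_Suc_iff[of "\<lambda>n. fst (P n t)"] by simp
  moreover have "(\<lambda>n. snd (P n t)) sums (integral {t0..t} (\<lambda>s. q s * Yf s) + 0)"
    using g2 sums_Suc_iff[of "\<lambda>n. snd (P n t)"] by simp
  ultimately show ?thesis using g1 g2 by (simp add: add.commute)
qed


lemma Y_eq: "t0 \<le> t \<Longrightarrow> Yf t = 1 + integral {t0..t} (\<lambda>s. p s * Zf s)"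
  using main_sums[of t] unfolding Yf_def by (simp add: sums_iff)

lemma Z_eq: "t0 \<le> t \<Longrightarrow> Zf t = integral {t0..t} (\<lambda>s. q s * Yf s)"
  using main_sums[of t] unfolding Zf_def by (simp add: sums_iff)

lemma YZ_cont: "continuous_on {t0..b} Yf \<and> continuous_on {t0..b} Zf"
proof (cases "t0 \<le> b")
  case False then show ?thesis by simp
next
  case True
  have i: "(\<lambda>s. p s * Zf s) integrable_on {t0..b}" "(\<lambda>s. q s * Yf s) integrable_on {t0..b}"
    using main_sums[OF True] by auto
  have "continuous_on {t0..b} (\<lambda>t. 1 + integral {t0..t} (\<lambda>s. p s * Zf s))"
    by (intro continuous_intros indefinite_integral_continuous_1 i)
  then have "continuous_on {t0..b} Yf"
    by (rule continuous_on_eq) (simp add: Y_eq)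
  moreover have "continuous_on {t0..b} (\<lambda>t. integral {t0..t} (\<lambda>s. q s * Yf s))"
    by (intro indefinite_integral_continuous_1 i)
  then have "continuous_on {t0..b} Zf"
    by (rule continuous_on_eq) (simp add: Z_eq)
  ultimately show ?thesis by blast
qed

lemma int_deriv:
  assumes "continuous_on {t0..t+1} h" "t0 < t"
  shows "((\<lambda>u. integral {t0..u} h) has_real_derivative h t) (at t)"
proof -
  have "((\<lambda>u. integral {t0..u} h) has_vector_derivative h t) (at t within {t0..t+1})"
    using integral_has_vector_derivative[OF assms(1)] assms(2) by auto
  moreover have "at t within {t0..t+1} = at t"
    using assms(2) by (intro at_within_interior) auto
  ultimately show ?thesis by (simp add: has_real_derivative_iff_has_vector_derivative)
qed

lemma YZ_deriv:
  assumes "t0 < t"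
  shows "(Yf has_real_derivative p t * Zf t) (at t) \<and> (Zf has_real_derivative q t * Yf t) (at t)"
proof -
  have c: "continuous_on {t0..t+1} (\<lambda>s. p s * Zf s)" "continuous_on {t0..t+1} (\<lambda>s. q s * Yf s)"
    using YZ_cont cpb cqb by (auto intro!: continuous_on_mult)
  have ev: "eventually (\<lambda>u. u \<in> {t0<..}) (nhds t)"
    using assms by (intro eventually_nhds_in_open) auto
  have d1: "((\<lambda>u. 1 + integral {t0..u} (\<lambda>s. p s * Zf s)) has_real_derivative p t * Zf t) (at t)"
    using DERIV_add[OF DERIV_const int_deriv[OF c(1) assms]] by simp
  have d2: "((\<lambda>u. integral {t0..u} (\<lambda>s. q s * Yf s)) has_real_derivative q t * Yf t) (at t)"
    using int_deriv[OF c(2) assms] .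
  have e1: "eventually (\<lambda>u. Yf u = 1 + integral {t0..u} (\<lambda>s. p s * Zf s)) (nhds t)"
    using ev by (rule eventually_mono) (simp add: Y_eq)
  have e2: "eventually (\<lambda>u. Zf u = integral {t0..u} (\<lambda>s. q s * Yf s)) (nhds t)"
    using ev by (rule eventually_mono) (simp add: Z_eq)
  show ?thesis
    using DERIV_cong_ev[OF refl e1 refl, THEN iffD2, OF d1] DERIV_cong_ev[OF refl e2 refl, THEN iffD2, OF d2]
    by blast
qed

lemma Y0: "Yf t0 = 1" and Z0: "Zf t0 = 0"
  using Y_eq[of t0] Z_eq[of t0] by auto

end

lemma ode_exists:
  fixes p q :: "real \<Rightarrow> real"
  assumes "continuous_on {t0..} p" "continuous_on {t0..} q"
  shows "\<exists>y z. y t0 = 1 \<and> z t0 = 0 \<and> (\<forall>b. continuous_on {t0..b} y \<and> continuous_on {t0..b} z)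
     \<and> (\<forall>t>t0. (y has_real_derivative p t * z t) (at t) \<and> (z has_real_derivative q t * y t) (at t))"
proof -
  interpret odeset p q t0 using assms by unfold_locales
  show ?thesis
    by (rule exI[of _ Yf], rule exI[of _ Zf]) (simp add: Y0 Z0 YZ_cont YZ_deriv)
qed

lemma int_deriv_g:
  assumes "continuous_on {a..t+1} h" "a < t"
  shows "((\<lambda>u. integral {a..u} h) has_real_derivative h t) (at t)"
proof -
  have "((\<lambda>u. integral {a..u} h) has_vector_derivative h t) (at t within {a..t+1})"
    using integral_has_vector_derivative[OF assms(1)] assms(2) by auto
  moreover have "at t within {a..t+1} = at t"
    using assms(2) by (intro at_within_interior) auto
  ultimately show ?thesis by (simp add: has_real_derivative_iff_has_vector_derivative)
qed

lemma two_prod_le: "\<bar>2 * a * b\<bar> \<le> a^2 + (b::real)^2"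
proof -
  have "0 \<le> (\<bar>a\<bar> - \<bar>b\<bar>)^2" by simp
  then show ?thesis by (simp add: power2_eq_square abs_mult algebra_simps)
qed

lemma energy:
  fixes y z p q :: "real \<Rightarrow> real"
  assumes cy: "continuous_on {t0..s} y" and cz: "continuous_on {t0..s} z"
    and cp: "continuous_on {t0..s} p" and cq: "continuous_on {t0..s} q"
    and d: "\<And>t. t0 < t \<Longrightarrow> t < s \<Longrightarrow> (y has_real_derivative p t * z t) (at t) \<and> (z has_real_derivative q t * y t) (at t)"
    and ts: "t0 \<le> s" and y0: "y t0 = 1"
  shows "y s ^ 2 + z s ^ 2 > 0"
proof -
  have "bounded ((\<lambda>x. p x + q x) ` {t0..s})"
    using cp cq by (intro compact_imp_bounded compact_continuous_image continuous_intros) auto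
  then obtain K where K: "\<forall>x\<in>{t0..s}. \<bar>p x + q x\<bar> \<le> K" unfolding bounded_real by auto
  define h where "h t = (y t ^ 2 + z t ^ 2) * exp (K * t)" for t
  have "h t0 \<le> h s"
  proof (rule DERIV_nonneg_imp_increasing_open[OF ts])
    fix x assume x: "t0 < x" "x < s"
    have dx: "(y has_real_derivative p x * z x) (at x)" "(z has_real_derivative q x * y x) (at x)"
      using d[OF x] by auto
    define w where "w = y x ^ 2 + z x ^ 2"
    have "((\<lambda>t. (y t ^ 2 + z t ^ 2) * exp (K * t)) has_real_derivative
       (2 * y x * (p x * z x) + 2 * z x * (q x * y x)) * exp (K * x) + w * (exp (K * x) * K)) (at x)"
      unfolding w_def by (auto intro!: derivative_eq_intros dx)
    moreover have "0 \<le> (2 * y x * (p x * z x) + 2 * z x * (q x * y x)) * exp (K * x) + w * (exp (K * x) * K)"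
    proof -
      have e: "2 * y x * (p x * z x) + 2 * z x * (q x * y x) = (2 * y x * z x) * (p x + q x)"
        by (simp add: algebra_simps)
      have "\<bar>(2 * y x * z x) * (p x + q x)\<bar> \<le> w * K"
        unfolding abs_mult w_def using two_prod_le[of "y x" "z x"] K x
        by (intro mult_mono) auto
      then have "0 \<le> 2 * y x * (p x * z x) + 2 * z x * (q x * y x) + w * K"
        unfolding e by linarith
      then have "0 \<le> (2 * y x * (p x * z x) + 2 * z x * (q x * y x) + w * K) * exp (K * x)"
        by simp
      then show ?thesis by (simp add: algebra_simps)
    qed
    ultimately show "\<exists>D. (h has_real_derivative D) (at x) \<and> 0 \<le> D"
      unfolding h_def by blast
  next
    show "continuous_on {t0..s} h" unfolding h_def
      using cy cz by (intro continuous_intros) auto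
  qed
  moreover have "h t0 > 0" unfolding h_def using y0 by (simp add: add_pos_nonneg)
  ultimately have "h s > 0" by linarith
  then show ?thesis unfolding h_def by (simp add: zero_less_mult_iff)
qed


lemma const_deriv0:
  fixes f :: "real \<Rightarrow> real"
  assumes "a \<le> b" "\<And>x. a \<le> x \<Longrightarrow> x \<le> b \<Longrightarrow> DERIV f x :> 0"
  shows "f b = f a"
proof -
  have "f a \<le> f b" by (rule DERIV_nonneg_imp_nondecreasing[OF assms(1)]) (use assms(2) in auto)
  moreover have "f b \<le> f a" by (rule DERIV_nonpos_imp_nonincreasing[OF assms(1)]) (use assms(2) in auto)
  ultimately show ?thesis by simp
qed

lemma riccati:
  fixes y z p g F G :: "real \<Rightarrow> real"
  assumes pc: "continuous_on {T0<..} p"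
    and h: "\<And>t. t > T0 \<Longrightarrow> y t \<noteq> 0 \<and> p t > 0 \<and> (y has_real_derivative p t * z t) (at t)
          \<and> (z has_real_derivative - g t * y t) (at t) \<and> (F has_real_derivative p t) (at t)
          \<and> (G has_real_derivative g t) (at t)"
    and Fl: "filterlim F at_top at_top" and Gl: "filterlim G at_top at_top"
  shows False
proof -
  define Ta where "Ta = T0 + 1/2"
  define T1 where "T1 = T0 + 1"
  define v where "v t = z t / y t" for t
  have dv: "(v has_real_derivative (- g t - p t * v t ^ 2)) (at t)" if t: "t > T0" for t
  proof -
    have ht: "y t \<noteq> 0" "(y has_real_derivative p t * z t) (at t)" "(z has_real_derivative - g t * y t) (at t)"
      using h[OF t] by auto
    have "((\<lambda>t. z t / y t) has_real_derivative ((- g t * y t) * y t - z t * (p t * z t)) / (y t * y t)) (at t)"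
      by (rule DERIV_divide[OF ht(3) ht(2) ht(1)])
    moreover have "((- g t * y t) * y t - z t * (p t * z t)) / (y t * y t) = - g t - p t * v t ^ 2"
      using ht(1) unfolding v_def by (simp add: field_simps power2_eq_square)
    ultimately show ?thesis unfolding v_def by simp
  qed
  have pvc: "continuous_on {a..b} (\<lambda>s. p s * v s ^ 2)" if "a > T0" for a b
  proof -
    have "continuous_on {a..b} p" using that by (intro continuous_on_subset[OF pc]) auto
    moreover have "continuous_on {a..b} v"
    proof (intro continuous_at_imp_continuous_on ballI)
      fix x assume "x \<in> {a..b}"
      then have "x > T0" using that by auto
      then show "isCont v x" using dv DERIV_isCont by blast
    qed
    ultimately show ?thesis by (intro continuous_intros)
  qed
  define R where "R t = integral {Ta..t} (\<lambda>s. p s * v s ^ 2)" for t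
  have dR: "(R has_real_derivative p t * v t ^ 2) (at t)" if "t > Ta" for t
    unfolding R_def by (rule int_deriv_g[OF pvc that]) (simp add: Ta_def)
  have R0: "R t \<ge> 0" for t
    unfolding R_def
  proof (rule integral_nonneg)
    show "(\<lambda>s. p s * v s ^ 2) integrable_on {Ta..t}"
      by (rule integrable_continuous_real[OF pvc]) (simp add: Ta_def)
    show "\<And>x. x \<in> {Ta..t} \<Longrightarrow> 0 \<le> p x * v x ^ 2"
    proof -
      fix x assume "x \<in> {Ta..t}"
      then have "x > T0" unfolding Ta_def by auto
      then have "p x > 0" using h by blast
      then show "0 \<le> p x * v x ^ 2" by simp
    qed
  qed
  define psi where "psi t = v t + G t + R t" for t
  have psic: "psi t = psi T1" if "t \<ge> T1" for t
  proof (rule const_deriv0[OF that])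
    fix x assume x: "T1 \<le> x" "x \<le> t"
    then have x0: "x > T0" "x > Ta" unfolding T1_def Ta_def by auto
    have "(psi has_real_derivative (- g x - p x * v x ^ 2) + g x + p x * v x ^ 2) (at x)"
      unfolding psi_def using dv[OF x0(1)] h[OF x0(1)] dR[OF x0(2)]
      by (intro DERIV_add) auto
    then show "(psi has_real_derivative 0) (at x)" by simp
  qed
  obtain N where N: "\<And>t. t \<ge> N \<Longrightarrow> G t \<ge> psi T1 + 1"
    using Gl unfolding filterlim_at_top eventually_at_top_linorder by blast
  define T2 where "T2 = max T1 N"
  have vb: "v t \<le> -1 - R t" if "t \<ge> T2" for t
    using psic[of t] N[of t] that unfolding T2_def psi_def by auto
  define phi where "phi t = - inverse (1 + R t) - F t" for t
  have mono: "phi T2 \<le> phi t" if t: "t \<ge> T2" for t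
  proof (rule DERIV_nonneg_imp_nondecreasing[OF t])
    fix x assume x: "T2 \<le> x" "x \<le> t"
    then have x0: "x > T0" "x > Ta" unfolding T2_def T1_def Ta_def by auto
    have Rp: "1 + R x > 0" using R0[of x] by simp
    have dF: "(F has_real_derivative p x) (at x)" and px: "p x > 0" using h[OF x0(1)] by auto
    have d: "(phi has_real_derivative (- (- ((0 + p x * v x ^ 2) * inverse ((1 + R x) ^ Suc (Suc 0))))) - p x) (at x)"
      unfolding phi_def
      by (intro DERIV_diff DERIV_minus DERIV_inverse_fun DERIV_add DERIV_const dR x0 dF) (use Rp in simp)
    have "(1 + R x) ^ 2 \<le> v x ^ 2"
    proof -
      have "1 + R x \<le> - v x" using vb[of x] x by simp
      then have "(1 + R x) ^ 2 \<le> (- v x) ^ 2" using Rp by (intro power_mono) auto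
      then show ?thesis by simp
    qed
    then have "p x * (1 + R x) ^ 2 \<le> p x * v x ^ 2" using px by (intro mult_left_mono) auto
    then have "p x \<le> p x * v x ^ 2 / (1 + R x) ^ 2" using Rp by (simp add: field_simps)
    then have "0 \<le> (- (- ((0 + p x * v x ^ 2) * inverse ((1 + R x) ^ Suc (Suc 0))))) - p x"
      by (simp add: divide_inverse power2_eq_square)
    then show "\<exists>D. (phi has_real_derivative D) (at x) \<and> 0 \<le> D" using d by blast
  qed
  have Fb: "F t \<le> F T2 + inverse (1 + R T2)" if "t \<ge> T2" for t
  proof -
    have "inverse (1 + R t) > 0" using R0[of t] by simp
    then show ?thesis using mono[OF that] unfolding phi_def by linarith
  qed
  obtain N2 where N2: "\<And>t. t \<ge> N2 \<Longrightarrow> F t \<ge> F T2 + inverse (1 + R T2) + 1"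
    using Fl unfolding filterlim_at_top eventually_at_top_linorder by blast
  show False using Fb[of "max T2 N2"] N2[of "max T2 N2"] by simp
qed

theorem mainTheorem15:
  fixes H :: "(real \<Rightarrow> real) set" and f g :: "real \<Rightarrow> real"
  assumes "hardy_field H"
    and "f \<in> H" and "\<not> eventually (\<lambda>t. f t = 0) at_top"
    and "g \<in> H"
    and "\<exists>F. germ_C 1 F \<and> eventually (\<lambda>t. deriv F t = inverse (f t)) at_top
              \<and> filterlim F at_top at_top"
    and "\<exists>G. germ_C 1 G \<and> eventually (\<lambda>t. deriv G t = g t) at_top
              \<and> filterlim G at_top at_top"
  shows "\<exists>y. germ_Cinf y \<and> oscillates y \<and>
           eventually (\<lambda>t. f t * deriv (deriv y) t + deriv f t * deriv y t + g t * y t = 0) at_top"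
proof -
  from assms(1) have Hc: "\<forall>h\<in>H. germ_Cinf h"
    and Hinv: "\<forall>h\<in>H. \<not> eventually (\<lambda>t. h t = 0) at_top \<longrightarrow> (\<lambda>t. inverse (h t)) \<in> H"
    and Hneg: "\<forall>h\<in>H. (\<lambda>t. - h t) \<in> H"
    unfolding hardy_field_def by auto
  define p where "p = (\<lambda>t. inverse (f t))"
  define q where "q = (\<lambda>t. - g t)"
  have fC: "germ_Cinf f" and gC: "germ_Cinf g" using Hc assms(2,4) by auto
  have pC: "germ_Cinf p" unfolding p_def using Hc Hinv assms(2,3) by auto
  have qC: "germ_Cinf q" unfolding q_def using Hc Hneg assms(4) by auto
  obtain a1 where a1: "C_on (Suc 0) a1 f" using fC unfolding germ_Cinf_def germ_C_def by blast
  obtain a2 where a2: "C_on 0 a2 p" using pC unfolding germ_Cinf_def germ_C_def by blast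
  obtain a3 where a3: "C_on 0 a3 g" using gC unfolding germ_Cinf_def germ_C_def by blast
  obtain F where F1: "germ_C 1 F" and F2: "eventually (\<lambda>t. deriv F t = inverse (f t)) at_top"
    and Fl: "filterlim F at_top at_top" using assms(5) by blast
  obtain G where G1: "germ_C 1 G" and G2: "eventually (\<lambda>t. deriv G t = g t) at_top"
    and Gl: "filterlim G at_top at_top" using assms(6) by blast
  obtain aF where aF: "C_on (Suc 0) aF F" using F1 unfolding germ_C_def by auto
  obtain aG where aG: "C_on (Suc 0) aG G" using G1 unfolding germ_C_def by auto
  obtain bF where bF: "\<And>t. t \<ge> bF \<Longrightarrow> deriv F t = inverse (f t)"
    using F2 unfolding eventually_at_top_linorder by blast
  obtain bG where bG: "\<And>t. t \<ge> bG \<Longrightarrow> deriv G t = g t"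
    using G2 unfolding eventually_at_top_linorder by blast
  define A where "A = max (max (max a1 a2) (max a3 aF)) (max (max bF aG) bG)"
  have fd: "(f has_real_derivative deriv f t) (at t)" if "t > A" for t
    using a1 that unfolding C_on_Suc A_def by auto
  have Fd: "(F has_real_derivative p t) (at t)" if "t > A" for t
    using aF that bF[of t] unfolding C_on_Suc A_def p_def by auto
  have Gd: "(G has_real_derivative g t) (at t)" if "t > A" for t
    using aG that bG[of t] unfolding C_on_Suc A_def by auto
  have fc: "continuous_on {A<..} f"
    using C_on_cont[OF a1] by (rule continuous_on_subset) (auto simp: A_def)
  have pc: "continuous_on {A<..} p"
    using a2 unfolding C_on_0 by (rule continuous_on_subset) (auto simp: A_def)
  have gc: "continuous_on {A<..} g"
    using a3 unfolding C_on_0 by (rule continuous_on_subset) (auto simp: A_def)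
  have fnz: "f t \<noteq> 0" if t1: "t > A" for t
  proof
    assume f0: "f t = 0"
    obtain t2 where t2: "t2 \<ge> A + 1" "f t2 \<noteq> 0"
      using assms(3) unfolding eventually_at_top_linorder by blast
    define k where "k s = f s * p s" for s
    have kc: "continuous_on {A<..} k" unfolding k_def using fc pc by (intro continuous_intros)
    have k1: "k t = 0" "k t2 = 1" using f0 t2 unfolding k_def p_def by auto
    have kv: "k x = 0 \<or> k x = 1" for x unfolding k_def p_def by (cases "f x = 0") auto
    have "\<exists>x. min t t2 \<le> x \<and> x \<le> max t t2 \<and> k x = 1/2"
    proof (cases "t \<le> t2")
      case True
      have "continuous_on {t..t2} k" using kc by (rule continuous_on_subset) (use t1 in auto)
      then show ?thesis using IVT'[of k t "1/2" t2] k1 True by auto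
    next
      case False
      have "continuous_on {t2..t} k" using kc by (rule continuous_on_subset) (use t2 in auto)
      then show ?thesis using IVT2'[of k t "1/2" t2] k1 False by auto
    qed
    then obtain x where "k x = 1/2" by blast
    then show False using kv[of x] by simp
  qed
  have fpos: "f t > 0" if t1: "t > A" for t
  proof (rule ccontr)
    assume "\<not> f t > 0"
    then have ft: "f t < 0" using fnz[OF t1] by linarith
    have neg: "f s < 0" if s: "s \<ge> t" for s
    proof (rule ccontr)
      assume "\<not> f s < 0"
      then have "f s \<ge> 0" by simp
      have "continuous_on {t..s} f" using fc by (rule continuous_on_subset) (use t1 in auto)
      then obtain x where "t \<le> x" "x \<le> s" "f x = 0" using IVT'[of f t 0 s] ft \<open>f s \<ge> 0\<close> s by auto
      then show False using fnz[of x] t1 by auto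
    qed
    have Fle: "F s \<le> F t" if s: "s \<ge> t" for s
    proof (rule DERIV_nonpos_imp_nonincreasing[OF s])
      fix x assume "t \<le> x" "x \<le> s"
      then have "x > A" "f x < 0" using t1 neg by auto
      then show "\<exists>D. (F has_real_derivative D) (at x) \<and> D \<le> 0"
        using Fd[of x] unfolding p_def by (intro exI[of _ "inverse (f x)"]) auto
    qed
    obtain N where N: "\<And>s. s \<ge> N \<Longrightarrow> F s \<ge> F t + 1"
      using Fl unfolding filterlim_at_top eventually_at_top_linorder by blast
    have "F (max N t) \<ge> F t + 1" by (rule N) simp
    moreover have "F (max N t) \<le> F t" by (rule Fle) simp
    ultimately show False by simp
  qed
  define t0 where "t0 = A + 1"
  have cp: "continuous_on {t0..} p" using pc by (rule continuous_on_subset) (auto simp: t0_def)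
  have cq: "continuous_on {t0..} q" unfolding q_def
    using continuous_on_minus[OF gc] by (rule continuous_on_subset) (auto simp: t0_def)
  obtain y z where y0: "y t0 = 1" and z0: "z t0 = 0"
    and yzc: "\<And>b. continuous_on {t0..b} y \<and> continuous_on {t0..b} z"
    and yzd: "\<And>t. t > t0 \<Longrightarrow> (y has_real_derivative p t * z t) (at t) \<and> (z has_real_derivative q t * y t) (at t)"
    using ode_exists[OF cp cq] by blast
  have sm: "\<exists>a. C_on n a y \<and> C_on n a z \<and> t0 \<le> a" for n
  proof (induction n)
    case 0
    have "continuous_on {t0<..} y" "continuous_on {t0<..} z"
      using yzd by (auto intro!: continuous_at_imp_continuous_on intro: DERIV_isCont)
    then show ?case unfolding C_on_0 by auto
  next
    case (Suc n)
    then obtain a where a: "C_on n a y" "C_on n a z" "t0 \<le> a" by blast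
    obtain ap where ap: "C_on n ap p" using pC unfolding germ_Cinf_def germ_C_def by blast
    obtain aq where aq: "C_on n aq q" using qC unfolding germ_Cinf_def germ_C_def by blast
    define c where "c = max a (max ap aq)"
    have m: "C_on n c y" "C_on n c z" "C_on n c p" "C_on n c q"
      using a ap aq by (auto intro: C_on_mono_a simp: c_def)
    have "C_on (Suc n) c y"
      by (rule C_on_deriv_eq[OF _ C_on_mult[OF m(3) m(2)]]) (use yzd a in \<open>auto simp: c_def\<close>)
    moreover have "C_on (Suc n) c z"
      by (rule C_on_deriv_eq[OF _ C_on_mult[OF m(4) m(1)]]) (use yzd a in \<open>auto simp: c_def\<close>)
    ultimately show ?case using a by (auto simp: c_def)
  qed
  have yC: "germ_Cinf y" unfolding germ_Cinf_def germ_C_def using sm by blast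
  have ode: "eventually (\<lambda>t. f t * deriv (deriv y) t + deriv f t * deriv y t + g t * y t = 0) at_top"
    unfolding eventually_at_top_linorder
  proof (intro exI[of _ "t0 + 1"] allI impI)
    fix t assume t: "t \<ge> t0 + 1"
    then have tA: "t > A" "t > t0" unfolding t0_def by auto
    have dy: "deriv y s = p s * z s" if "s > t0" for s using yzd[OF that] DERIV_imp_deriv by blast
    have ev: "eventually (\<lambda>s. deriv y s = p s * z s) (nhds t)"
      using eventually_nhds_in_open[of "{t0<..}" t] tA by (auto elim!: eventually_mono intro: dy)
    have "deriv (deriv y) t = deriv (\<lambda>s. p s * z s) t" by (rule deriv_cong_ev[OF ev refl])
    moreover have "((\<lambda>s. p s * z s) has_real_derivative
        (- (deriv f t * inverse (f t ^ Suc (Suc 0)))) * z t + (q t * y t) * inverse (f t)) (at t)"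
      unfolding p_def
      by (rule DERIV_mult[OF DERIV_inverse_fun[OF fd[OF tA(1)] fnz[OF tA(1)]] conjunct2[OF yzd[OF tA(2)]]])
    ultimately have e2: "deriv (deriv y) t = (- (deriv f t * inverse (f t ^ Suc (Suc 0)))) * z t + (q t * y t) * inverse (f t)"
      using DERIV_imp_deriv by simp
    have e1: "deriv y t = inverse (f t) * z t" using dy[OF tA(2)] by (simp add: p_def)
    show "f t * deriv (deriv y) t + deriv f t * deriv y t + g t * y t = 0"
      unfolding e2 e1 q_def using fnz[OF tA(1)] by (simp add: field_simps power2_eq_square)
  qed
  have nz: "frequently (\<lambda>t. y t \<noteq> 0) at_top"
  proof (rule ccontr)
    assume "\<not> frequently (\<lambda>t. y t \<noteq> 0) at_top"
    then have "eventually (\<lambda>t. y t = 0) at_top" by (simp add: not_frequently)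
    then obtain T where T: "\<And>t. t \<ge> T \<Longrightarrow> y t = 0" unfolding eventually_at_top_linorder by blast
    define s where "s = max T t0 + 1"
    have "y s ^ 2 + z s ^ 2 > 0"
    proof (rule energy[of t0 s y z p q])
      show "continuous_on {t0..s} y" "continuous_on {t0..s} z" using yzc by auto
      show "continuous_on {t0..s} p" "continuous_on {t0..s} q" using cp cq by (auto intro: continuous_on_subset)
    qed (use yzd y0 in \<open>auto simp: s_def\<close>)
    moreover have "y s = 0" using T by (simp add: s_def)
    moreover have "z s = 0"
    proof -
      have "eventually (\<lambda>x. x \<in> {T<..}) (nhds s)"
        by (rule eventually_nhds_in_open) (auto simp: s_def)
      then have ev: "eventually (\<lambda>x. y x = 0) (nhds s)"
        by (rule eventually_mono) (simp add: T)
      have "(y has_real_derivative 0) (at s)"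
        using DERIV_cong_ev[OF refl ev refl] by (simp add: DERIV_const)
      moreover have "(y has_real_derivative p s * z s) (at s)" using yzd[of s] by (simp add: s_def)
      ultimately have "p s * z s = 0" using DERIV_unique by blast
      moreover have "p s \<noteq> 0" using fnz[of s] by (simp add: p_def s_def t0_def)
      ultimately show ?thesis by simp
    qed
    ultimately show False by simp
  qed
  have zf: "frequently (\<lambda>t. y t = 0) at_top"
  proof (rule ccontr)
    assume "\<not> frequently (\<lambda>t. y t = 0) at_top"
    then have "eventually (\<lambda>t. y t \<noteq> 0) at_top" by (simp add: not_frequently)
    then obtain T where T: "\<And>t. t \<ge> T \<Longrightarrow> y t \<noteq> 0" unfolding eventually_at_top_linorder by blast
    define T0 where "T0 = max T t0"
    show False
    proof (rule riccati[of T0 p y z g F G, OF _ _ Fl Gl])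
      show "continuous_on {T0<..} p" using pc by (rule continuous_on_subset) (auto simp: T0_def t0_def)
      fix t assume t: "t > T0"
      then have tt: "t > A" "t > t0" "t \<ge> T" by (auto simp: T0_def t0_def)
      show "y t \<noteq> 0 \<and> p t > 0 \<and> (y has_real_derivative p t * z t) (at t)
          \<and> (z has_real_derivative - g t * y t) (at t) \<and> (F has_real_derivative p t) (at t)
          \<and> (G has_real_derivative g t) (at t)"
        using T[OF tt(3)] fpos[OF tt(1)] yzd[OF tt(2)] Fd[OF tt(1)] Gd[OF tt(1)]
        by (simp add: p_def q_def)
    qed
  qed
  show ?thesis using yC nz zf ode unfolding oscillates_def by blast
qed

end
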